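(* Let $(X,d_X,\mu_X)$ be an mm-space with $X=\operatorname{supp}\mu_X$, and assume the 1-measurement $\mathcal M(X;1)$ has a maximum with respect to the Lipschitz order. Then for any two points $x,y\in X$ with $d_X(x,y)=\operatorname{diam}X<\infty$, we have $d_X(x,z)+d_X(z,y)=\operatorname{diam}X$ for every point $z\in X$.
   Context: An mm-space is a triple $(X,d_X,\mu_X)$ where $(X,d_X)$ is a complete separable metric space and $\mu_X$ is a Borel probability measure on $X$. The 1-measurement is $\mathcal M(X;1):=\{f_*\mu_X \mid f:X\to\mathbb R \text{ is 1-Lipschitz}\}$. Two mm-spaces $X,Y$ are mm-isomorphic if there is an isometry $f:\operatorname{supp}\mu_X\to\operatorname{supp}\mu_Y$ with $f_*\mu_X=\mu_Y$. For mm-spaces, $Y\prec X$ (Lipschitz order) if there is a 1-Lipschitz map $f:\operatorname{supp}\mu_X\to\operatorname{supp}\mu_Y$ with $f_*\mu_X=\mu_Y$; a partial order on mm-isomorphism classes. For Borel probability measures $\mu,\nu$ on $\mathbb R$, $\mu\prec\nu$ means $(\mathbb R,|\cdot|,\mu)\prec(\mathbb R,|\cdot|,\nu)$. A maximum of $\mathcal M(X;1)$ is an element $\mu\in\mathcal M(X;1)$ with $\nu\prec\mu$ for all $\nu\in\mathcal M(X;1)$. *)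

theory Defs
  imports "HOL-Probability.Probability"
begin

definition mm_support :: "'a::metric_space measure \<Rightarrow> 'a set" where
  "mm_support M = {x. \<forall>e>0. emeasure M (ball x e) > 0}"

definition lip_prec :: "real measure \<Rightarrow> real measure \<Rightarrow> bool" where
  "lip_prec mu nu \<longleftrightarrow>
     (\<exists>f :: real \<Rightarrow> real. f \<in> borel_measurable borel \<and>
        lipschitz_on 1 (mm_support nu) f \<and>
        f ` mm_support nu \<subseteq> mm_support mu \<and>
        distr nu borel f = mu)"

definition measurement1 :: "'a::metric_space measure \<Rightarrow> real measure set" where
  "measurement1 M = {distr M borel f | f :: 'a \<Rightarrow> real. lipschitz_on 1 UNIV f}"

end

theory Submission
  imports Defs
begin

lemma meas_of_cont:
  assumes "sets M = sets borel" "continuous_on UNIV (h::'a::metric_space \<Rightarrow> real)"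
  shows "h \<in> measurable M borel"
  using borel_measurable_continuous_onI[OF assms(2)] measurable_cong_sets[OF assms(1) refl]
  by blast

lemma mm_pos:
  fixes M :: "'a::metric_space measure" and h :: "'a \<Rightarrow> real"
  assumes "sets M = sets borel" "mm_support M = UNIV" "continuous_on UNIV h" "e > 0"
  shows "emeasure (distr M borel h) (ball (h p) e) > 0"
proof -
  have hm: "h \<in> measurable M borel" using meas_of_cont assms by blast
  have sp: "space M = UNIV" using sets_eq_imp_space_eq[OF assms(1)] by simp
  obtain d where d: "d > 0" "\<forall>q. dist q p < d \<longrightarrow> dist (h q) (h p) < e"
    using assms(3,4) unfolding continuous_on_iff by blast
  have sub: "ball p d \<subseteq> h -` ball (h p) e \<inter> space M"
    using d sp by (auto simp: dist_commute)
  have "emeasure M (ball p d) > 0"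
    using assms(2) d(1) unfolding mm_support_def by blast
  also have "emeasure M (ball p d) \<le> emeasure M (h -` ball (h p) e \<inter> space M)"
    by (rule emeasure_mono[OF sub]) (use hm in measurable)
  also have "\<dots> = emeasure (distr M borel h) (ball (h p) e)"
    by (rule emeasure_distr[symmetric, OF hm]) simp
  finally show ?thesis .
qed

lemma mm_in_supp:
  fixes M :: "'a::metric_space measure" and h :: "'a \<Rightarrow> real"
  assumes "sets M = sets borel" "mm_support M = UNIV" "continuous_on UNIV h"
  shows "h p \<in> mm_support (distr M borel h)"
  using mm_pos[OF assms] unfolding mm_support_def by blast

lemma mm_approx:
  fixes M :: "'a::metric_space measure" and h :: "'a \<Rightarrow> real"
  assumes "h \<in> measurable M borel" "t \<in> mm_support (distr M borel h)" "e > 0"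
  shows "\<exists>p\<in>space M. dist (h p) t < e"
proof (rule ccontr)
  assume "\<not> ?thesis"
  hence "h -` ball t e \<inter> space M = {}" by (auto simp: dist_commute)
  hence "emeasure (distr M borel h) (ball t e) = 0"
    by (subst emeasure_distr[OF assms(1)]) auto
  thus False using assms(2,3) unfolding mm_support_def by auto
qed

lemma real_aux1:
  fixes a u s t D :: real
  assumes "\<bar>a - 0\<bar> \<le> \<bar>u - s\<bar>" "\<bar>a - D\<bar> \<le> \<bar>u - t\<bar>" "s \<le> u" "u \<le> t" "t - s = D"
  shows "a = u - s"
proof -
  have "\<bar>u - s\<bar> = u - s" "\<bar>u - t\<bar> = t - u" using assms(3,4) by auto
  thus ?thesis using assms(1,2,5) unfolding abs_le_iff by auto
qed

lemma real_aux2: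
  fixes a u s t D :: real
  assumes "\<bar>a - 0\<bar> \<le> \<bar>u - s\<bar>" "\<bar>a - D\<bar> \<le> \<bar>u - t\<bar>" "t \<le> u" "u \<le> s" "s - t = D"
  shows "a = t + D - u"
proof -
  have "\<bar>u - s\<bar> = s - u" "\<bar>u - t\<bar> = u - t" using assms(3,4) by auto
  thus ?thesis using assms(1,2,5) unfolding abs_le_iff by auto
qed

lemma key:
  fixes M :: "'a::metric_space measure" and f0 h :: "'a \<Rightarrow> real"
  assumes sM: "sets M = sets borel" and supp: "mm_support M = UNIV"
    and bd: "\<forall>p q::'a. dist p q \<le> D"
    and f0: "lipschitz_on 1 UNIV f0"
    and h: "lipschitz_on 1 UNIV h" and hx: "h x = 0" and hy: "h y = D"
    and lp: "lip_prec (distr M borel h) (distr M borel f0)"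
  shows "integral\<^sup>L M h = integral\<^sup>L M (\<lambda>p. f0 p - Inf (mm_support (distr M borel f0)))
       \<or> integral\<^sup>L M h = integral\<^sup>L M (\<lambda>p. Inf (mm_support (distr M borel f0)) + D - f0 p)"
proof -
  define S where "S = mm_support (distr M borel f0)"
  have f0c: "continuous_on UNIV f0" using lipschitz_on_continuous_on[OF f0] .
  have hc: "continuous_on UNIV h" using lipschitz_on_continuous_on[OF h] .
  have f0m: "f0 \<in> measurable M borel" using meas_of_cont[OF sM f0c] .
  have hm: "h \<in> measurable M borel" using meas_of_cont[OF sM hc] .
  have sp: "space M = UNIV" using sets_eq_imp_space_eq[OF sM] by simp
  have f0S: "\<And>p. f0 p \<in> S" unfolding S_def using mm_in_supp[OF sM supp f0c] .
  have Sdiam: "\<bar>u - v\<bar> \<le> D" if uv: "u \<in> S" "v \<in> S" for u v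
  proof (rule field_le_epsilon)
    fix e :: real assume e: "0 < e"
    obtain p where p: "dist (f0 p) u < e/2"
      using mm_approx[OF f0m uv(1)[unfolded S_def], of "e/2"] e by auto
    obtain q where q: "dist (f0 q) v < e/2"
      using mm_approx[OF f0m uv(2)[unfolded S_def], of "e/2"] e by auto
    have "dist (f0 p) (f0 q) \<le> 1 * dist p q" using lipschitz_onD[OF f0] by blast
    also have "\<dots> \<le> D" using bd by auto
    finally show "\<bar>u - v\<bar> \<le> D + e" using p q by (simp add: dist_real_def) (smt (verit))
  qed
  have Sclosed: "closed S"
  proof -
    have "closure S \<subseteq> S"
    proof
      fix t assume t: "t \<in> closure S"
      show "t \<in> S" unfolding S_def mm_support_def
      proof (intro CollectI allI impI)
        fix e :: real assume e: "e > 0"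
        obtain u where u: "u \<in> S" "dist u t < e/2"
          using t e unfolding closure_approachable by (metis half_gt_zero)
        have "0 < emeasure (distr M borel f0) (ball u (e/2))"
          using u(1) e unfolding S_def mm_support_def by auto
        also have "\<dots> \<le> emeasure (distr M borel f0) (ball t e)"
          by (rule emeasure_mono) (use u(2) in \<open>auto simp: dist_real_def, smt (verit)\<close>)
        finally show "0 < emeasure (distr M borel f0) (ball t e)" .
      qed
    qed
    thus ?thesis using closure_subset_eq by blast
  qed
  have Sbounded: "bounded S"
  proof -
    have "S \<subseteq> cball (f0 x) D" using Sdiam f0S by (auto simp: dist_real_def)
    thus ?thesis using bounded_subset bounded_cball by blast
  qed
  have Scomp: "compact S" using Sclosed Sbounded compact_eq_bounded_closed by blast
  obtain g where gm: "g \<in> borel_measurable borel" and gl: "lipschitz_on 1 S g"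
    and gd: "distr (distr M borel f0) borel g = distr M borel h"
    using lp unfolding lip_prec_def S_def by blast
  have dd: "distr M borel h = distr M borel (g \<circ> f0)"
    using gd distr_distr[OF gm f0m] by simp
  have gS: "closed (g ` S)"
    using compact_continuous_image[OF lipschitz_on_continuous_on[OF gl] Scomp] compact_imp_closed by blast
  have hit: "h p \<in> g ` S" for p
  proof -
    have "h p \<in> closure (g ` S)" unfolding closure_approachable
    proof (intro allI impI)
      fix e :: real assume e: "e > 0"
      have "h p \<in> mm_support (distr M borel (g \<circ> f0))"
        using mm_in_supp[OF sM supp hc, of p] dd by simp
      then obtain q where "dist ((g \<circ> f0) q) (h p) < e"
        using mm_approx[OF measurable_comp[OF f0m gm] _ e] by blast
      thus "\<exists>y\<in>g ` S. dist y (h p) < e" using f0S by auto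
    qed
    thus ?thesis using gS by (simp add: closure_closed)
  qed
  obtain s where s: "s \<in> S" "g s = 0" using hit[of x] hx by force
  obtain t where t: "t \<in> S" "g t = D" using hit[of y] hy by force
  have "dist (g s) (g t) \<le> 1 * dist s t" using lipschitz_onD[OF gl s(1) t(1)] .
  hence st1: "D \<le> \<bar>s - t\<bar>" using s t bd by (simp add: dist_real_def)
  have st2: "\<bar>s - t\<bar> \<le> D" using Sdiam s t by blast
  have gL: "\<bar>g u - g v\<bar> \<le> \<bar>u - v\<bar>" if "u \<in> S" "v \<in> S" for u v
    using lipschitz_onD[OF gl that] by (simp add: dist_real_def)
  have intg: "integral\<^sup>L M h = integral\<^sup>L M (\<lambda>p. g (f0 p))"
  proof -
    have "integral\<^sup>L M h = integral\<^sup>L (distr M borel h) (\<lambda>t. t)"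
      using integral_distr[OF hm, of "\<lambda>t. t"] by simp
    also have "\<dots> = integral\<^sup>L (distr M borel (g \<circ> f0)) (\<lambda>t. t)" using dd by simp
    also have "\<dots> = integral\<^sup>L M (\<lambda>p. g (f0 p))"
      using integral_distr[OF measurable_comp[OF f0m gm], of "\<lambda>t. t"] by simp
    finally show ?thesis .
  qed
  show ?thesis
  proof (cases "s \<le> t")
    case True
    have le: "s \<le> u" if "u \<in> S" for u using Sdiam[OF that t(1)] st1 st2 True by (smt (verit))
    have inf: "Inf S = s" using cInf_eq_minimum[OF s(1) le] .
    have "g u = u - s" if "u \<in> S" for u
      proof (rule real_aux1[of _ _ s D t])
      show "\<bar>g u - 0\<bar> \<le> \<bar>u - s\<bar>" using gL[OF that s(1)] s by simp
      show "\<bar>g u - D\<bar> \<le> \<bar>u - t\<bar>" using gL[OF that t(1)] t by simp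
      show "s \<le> u" using le[OF that] .
      show "u \<le> t" using Sdiam[OF that s(1)] st1 st2 True by auto
      show "t - s = D" using st1 st2 True by auto
    qed
    hence "integral\<^sup>L M h = integral\<^sup>L M (\<lambda>p. f0 p - Inf S)"
      using intg f0S inf by simp
    thus ?thesis unfolding S_def by blast
  next
    case False
    have le: "t \<le> u" if "u \<in> S" for u using Sdiam[OF that s(1)] st1 st2 False by (smt (verit))
    have inf: "Inf S = t" using cInf_eq_minimum[OF t(1) le] .
    have "g u = t + D - u" if "u \<in> S" for u
      proof (rule real_aux2[of _ _ s D t])
      show "\<bar>g u - 0\<bar> \<le> \<bar>u - s\<bar>" using gL[OF that s(1)] s by simp
      show "\<bar>g u - D\<bar> \<le> \<bar>u - t\<bar>" using gL[OF that t(1)] t by simp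
      show "t \<le> u" using le[OF that] .
      show "u \<le> s" using Sdiam[OF that t(1)] st1 st2 False by auto
      show "s - t = D" using st1 st2 False by auto
    qed
    hence "integral\<^sup>L M h = integral\<^sup>L M (\<lambda>p. Inf S + D - f0 p)"
      using intg f0S inf by simp
    thus ?thesis unfolding S_def by blast
  qed
qed

lemma lip_dist: "lipschitz_on 1 UNIV (\<lambda>p. dist (x::'a::metric_space) p)"
proof (rule lipschitz_onI)
  fix p q
  show "dist (dist x p) (dist x q) \<le> 1 * dist p q"
    using abs_dist_diff_le[of p x q] by (simp add: dist_real_def dist_commute)
qed simp

theorem theorem1p4:
  fixes M :: "'a::polish_space measure" and x y :: 'a
  assumes "prob_space M"
    and "sets M = sets borel"
    and "mm_support M = UNIV"
    and "\<exists>mu \<in> measurement1 M. \<forall>nu \<in> measurement1 M. lip_prec nu mu"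
    and "bounded (UNIV :: 'a set)"
    and "dist x y = diameter (UNIV :: 'a set)"
  shows "\<forall>z. dist x z + dist z y = diameter (UNIV :: 'a set)"
proof -
  define D where "D = diameter (UNIV :: 'a set)"
  have bd: "\<forall>p q::'a. dist p q \<le> D"
    unfolding D_def using diameter_bounded_bound[OF assms(5)] by blast
  have sM: "sets M = sets borel" and supp: "mm_support M = UNIV" using assms by auto
  have sp: "space M = UNIV" using sets_eq_imp_space_eq[OF sM] by simp
  interpret prob_space M by (rule assms(1))
  have xy: "dist x y = D" using assms(6) D_def by simp
  show ?thesis
  proof (cases "D = 0")
    case True
    thus ?thesis using bd D_def xy by (metis add.right_neutral dist_le_zero_iff)
  next
    case False
    obtain f0 where f0: "lipschitz_on 1 UNIV f0"
      and mx: "\<forall>nu \<in> measurement1 M. lip_prec nu (distr M borel f0)"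
      using assms(4) unfolding measurement1_def by blast
    define h1 where "h1 = (\<lambda>p. dist x p)"
    define h2 where "h2 = (\<lambda>p. D - dist y p)"
    define h3 where "h3 = (\<lambda>p. (h1 p + h2 p) / 2)"
    have l1: "lipschitz_on 1 UNIV h1" unfolding h1_def by (rule lip_dist)
    have l2: "lipschitz_on 1 UNIV h2" unfolding h2_def using lip_dist[of y]
      unfolding lipschitz_on_def by (simp add: dist_real_def abs_minus_commute)
    have l3: "lipschitz_on 1 UNIV h3" unfolding h3_def
    proof (rule lipschitz_onI)
      fix p q
      have "dist (h1 p) (h1 q) \<le> dist p q" "dist (h2 p) (h2 q) \<le> dist p q"
        using lipschitz_onD[OF l1] lipschitz_onD[OF l2] by auto
      thus "dist ((h1 p + h2 p) / 2) ((h1 q + h2 q) / 2) \<le> 1 * dist p q"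
        by (auto simp: dist_real_def abs_le_iff field_simps)
    qed simp
    have mem: "distr M borel h \<in> measurement1 M" if "lipschitz_on 1 UNIV h" for h
      unfolding measurement1_def using that by blast
    define c where "c = Inf (mm_support (distr M borel f0))"
    define A where "A = integral\<^sup>L M (\<lambda>p. f0 p - c)"
    define B where "B = integral\<^sup>L M (\<lambda>p. c + D - f0 p)"
    have k: "integral\<^sup>L M h = A \<or> integral\<^sup>L M h = B"
      if "lipschitz_on 1 UNIV h" "h x = 0" "h y = D" for h
      using key[OF sM supp bd f0 that mx[rule_format, OF mem[OF that(1)]]]
      unfolding A_def B_def c_def .
    have k1: "integral\<^sup>L M h1 = A \<or> integral\<^sup>L M h1 = B"
      by (rule k[OF l1]) (auto simp: h1_def xy)
    have k2: "integral\<^sup>L M h2 = A \<or> integral\<^sup>L M h2 = B"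
      by (rule k[OF l2]) (auto simp: h2_def xy dist_commute)
    have k3: "integral\<^sup>L M h3 = A \<or> integral\<^sup>L M h3 = B"
      by (rule k[OF l3]) (auto simp: h3_def h1_def h2_def xy dist_commute)
    have m1: "h1 \<in> borel_measurable M"
      using meas_of_cont[OF sM lipschitz_on_continuous_on[OF l1]] .
    have m2: "h2 \<in> borel_measurable M"
      using meas_of_cont[OF sM lipschitz_on_continuous_on[OF l2]] .
    have i1: "integrable M h1"
      by (rule integrable_const_bound[where B=D]) (use bd m1 in \<open>auto simp: h1_def\<close>)
    have i2: "integrable M h2"
    proof (rule integrable_const_bound[where B=D])
      show "AE p in M. norm (h2 p) \<le> D"
        using bd by (auto simp: h2_def)
    qed (rule m2)
    have "integral\<^sup>L M h3 = (integral\<^sup>L M h1 + integral\<^sup>L M h2) / 2"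
      unfolding h3_def using i1 i2 by simp
    hence eq: "integral\<^sup>L M h1 = integral\<^sup>L M h2" using k1 k2 k3 by auto
    define phi where "phi = (\<lambda>p. h1 p - h2 p)"
    have phi_eq: "phi p = dist x p + dist p y - D" for p
      unfolding phi_def h1_def h2_def by (simp add: dist_commute)
    have "integral\<^sup>L M phi = 0" unfolding phi_def using i1 i2 eq by simp
    moreover have nn: "0 \<le> phi p" for p
      unfolding phi_eq using dist_triangle[of x y p] xy by (simp add: dist_commute)
    ultimately have ae: "AE p in M. phi p = 0"
      using integral_nonneg_eq_0_iff_AE[of M phi] i1 i2 unfolding phi_def by auto
    have "phi z = 0" for z
    proof (rule ccontr)
      assume "phi z \<noteq> 0"
      hence pz: "phi z > 0" using nn[of z] by simp
      obtain N where N: "{p \<in> space M. \<not> phi p = 0} \<subseteq> N" "emeasure M N = 0" "N \<in> sets M"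
        using ae by (rule AE_E)
      have "ball z (phi z / 2) \<subseteq> N"
      proof
        fix p assume "p \<in> ball z (phi z / 2)"
        hence d: "dist z p < phi z / 2" by simp
        have "dist x z \<le> dist x p + dist p z" "dist z y \<le> dist z p + dist p y"
          using dist_triangle by auto
        hence "phi p > 0" using d pz unfolding phi_eq by (simp add: dist_commute)
        thus "p \<in> N" using N(1) sp by auto
      qed
      hence "emeasure M (ball z (phi z / 2)) \<le> emeasure M N"
        using N(3) by (rule emeasure_mono)
      moreover have "emeasure M (ball z (phi z / 2)) > 0"
      proof -
        have "z \<in> mm_support M" using supp by simp
        moreover have "phi z / 2 > 0" using pz by simp
        ultimately show ?thesis unfolding mm_support_def by blast
      qed
      ultimately show False using N(2) by simp
    qed
    thus ?thesis unfolding phi_eq D_def by (simp add: dist_commute)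
  qed
qed

end
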